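(* Every hypergraph in $\mathcal L$ is an atomic Maker-Breaker critical hypergraph.
   Context: A hypergraph $\mathcal H=(V,E)$ has finite vertex set $V$ and $E\subseteq 2^V\setminus\{\emptyset\}$. In the Maker-Breaker game on $\mathcal H$, Maker and Breaker alternately claim unclaimed vertices, Maker first, until all are claimed; Maker wins if he claims all vertices of some edge, Breaker otherwise. $\mathcal H$ is Maker-Breaker critical if Maker wins on $\mathcal H$ but Breaker wins on $(V,E\setminus\{e\})$ for every $e\in E$; it is atomic Maker-Breaker critical if moreover it has no isolated vertices. $\mathcal H^1$ is the hypergraph with one vertex $v$ and the single edge $\{v\}$. For vertex-disjoint hypergraphs $\mathcal H_1,\mathcal H_2$ with edges $e_1\in E(\mathcal H_1)$, $e_2\in E(\mathcal H_2)$, the hypergraph $(\mathcal H_1,e_1)+(\mathcal H_2,e_2)$ has vertex set $V(\mathcal H_1)\cup V(\mathcal H_2)\cup\{z\}$ with $z$ a new vertex, and edge set $\big(E(\mathcal H_1)\cup E(\mathcal H_2)\cup\{e_1\cup\{z\},e_2\cup\{z\}\}\big)\setminus\{e_1,e_2\}$. $\mathcal L$ is the smallest family with $\mathcal H^1\in\mathcal L$ and closed under this operation: if $\mathcal H_1,\mathcal H_2\in\mathcal L$ (vertex-disjoint copies) and $e_i\in E(\mathcal H_i)$ are arbitrary, then $(\mathcal H_1,e_1)+(\mathcal H_2,e_2)\in\mathcal L$. *)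

theory Defs
  imports Main
begin

type_synonym 'a hypergraph = "'a set \<times> 'a set set"

definition is_hypergraph :: "'a hypergraph \<Rightarrow> bool" where
  "is_hypergraph H \<longleftrightarrow> finite (fst H) \<and> snd H \<subseteq> Pow (fst H) - {{}}"

text \<open>Maker-Breaker game positions: M = Maker's claimed vertices, B = Breaker's,
  the boolean says whether it is Maker's turn. mb_win V E t M B means Maker has a
  winning strategy from that position.\<close>

inductive mb_win :: "'a set \<Rightarrow> 'a set set \<Rightarrow> bool \<Rightarrow> 'a set \<Rightarrow> 'a set \<Rightarrow> bool"
  for V :: "'a set" and E :: "'a set set" where
  final: "V \<subseteq> M \<union> B \<Longrightarrow> \<exists>e\<in>E. e \<subseteq> M \<Longrightarrow> mb_win V E t M B"
| maker_move: "v \<in> V - (M \<union> B) \<Longrightarrow> mb_win V E False (insert v M) B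
      \<Longrightarrow> mb_win V E True M B"
| breaker_move: "\<not> V \<subseteq> M \<union> B \<Longrightarrow> \<forall>v\<in>V - (M \<union> B). mb_win V E True M (insert v B)
      \<Longrightarrow> mb_win V E False M B"

definition maker_wins :: "'a hypergraph \<Rightarrow> bool" where
  "maker_wins H \<longleftrightarrow> mb_win (fst H) (snd H) True {} {}"

definition breaker_wins :: "'a hypergraph \<Rightarrow> bool" where
  "breaker_wins H \<longleftrightarrow> \<not> maker_wins H"

definition mb_critical :: "'a hypergraph \<Rightarrow> bool" where
  "mb_critical H \<longleftrightarrow> maker_wins H \<and> (\<forall>e\<in>snd H. breaker_wins (fst H, snd H - {e}))"

definition atomic_mb_critical :: "'a hypergraph \<Rightarrow> bool" where
  "atomic_mb_critical H \<longleftrightarrow> mb_critical H \<and> (\<forall>v\<in>fst H. \<exists>e\<in>snd H. v \<in> e)"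

definition hsum :: "'a hypergraph \<Rightarrow> 'a set \<Rightarrow> 'a hypergraph \<Rightarrow> 'a set \<Rightarrow> 'a \<Rightarrow> 'a hypergraph" where
  "hsum H1 e1 H2 e2 z =
     (fst H1 \<union> fst H2 \<union> {z},
      (snd H1 \<union> snd H2 \<union> {insert z e1, insert z e2}) - {e1, e2})"

inductive in_L :: "'a hypergraph \<Rightarrow> bool" where
  base: "in_L ({v}, {{v}})"
| sum: "in_L H1 \<Longrightarrow> in_L H2 \<Longrightarrow> fst H1 \<inter> fst H2 = {} \<Longrightarrow>
        e1 \<in> snd H1 \<Longrightarrow> e2 \<in> snd H2 \<Longrightarrow> z \<notin> fst H1 \<union> fst H2 \<Longrightarrow>
        in_L (hsum H1 e1 H2 e2 z)"

end

theory Submission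
  imports Defs
begin

lemma hsum_sym: "hsum H1 e1 H2 e2 z = hsum H2 e2 H1 e1 z"
  unfolding hsum_def by auto

definition wfL :: "'a hypergraph \<Rightarrow> bool" where
 "wfL H \<longleftrightarrow> finite (fst H) \<and> fst H \<noteq> {} \<and> (\<forall>f\<in>snd H. f \<noteq> {} \<and> f \<subseteq> fst H)
    \<and> (\<forall>v\<in>fst H. \<exists>f\<in>snd H. v\<in>f)"

lemma wfL_L: "in_L H \<Longrightarrow> wfL H"
proof (induction rule: in_L.induct)
  case (base v) show ?case by (auto simp: wfL_def)
next
  case (sum H1 H2 e1 e2 z)
  have ze: "z \<notin> e1" "z \<notin> e2" using sum unfolding wfL_def by blast+
  have ne: "insert z e1 \<noteq> e1" "insert z e1 \<noteq> e2" "insert z e2 \<noteq> e1" "insert z e2 \<noteq> e2"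
    using ze by blast+
  have w1: "\<And>f. f \<in> snd H1 \<Longrightarrow> f \<noteq> {} \<and> f \<subseteq> fst H1" using sum.IH(1) unfolding wfL_def by blast
  have w2: "\<And>f. f \<in> snd H2 \<Longrightarrow> f \<noteq> {} \<and> f \<subseteq> fst H2" using sum.IH(2) unfolding wfL_def by blast
  have o1: "\<And>f. f \<in> snd H1 \<Longrightarrow> f \<noteq> e2"
  proof
    fix f assume "f \<in> snd H1" "f = e2"
    then have "f \<noteq> {}" "f \<subseteq> fst H1" "f \<subseteq> fst H2" using w1 w2 sum.hyps(5) by auto
    then show False using sum.hyps(3) by blast
  qed
  have o2: "\<And>f. f \<in> snd H2 \<Longrightarrow> f \<noteq> e1"
  proof
    fix f assume "f \<in> snd H2" "f = e1"
    then have "f \<noteq> {}" "f \<subseteq> fst H1" "f \<subseteq> fst H2" using w1 w2 sum.hyps(4) by auto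
    then show False using sum.hyps(3) by blast
  qed
  define V where "V = fst H1 \<union> fst H2 \<union> {z}"
  define E where "E = (snd H1 \<union> snd H2 \<union> {insert z e1, insert z e2}) - {e1, e2}"
  have hs: "hsum H1 e1 H2 e2 z = (V, E)" unfolding hsum_def V_def E_def by simp
  have e12: "e1 \<subseteq> fst H1" "e2 \<subseteq> fst H2" using w1 w2 sum.hyps(4,5) by auto
  have A: "finite V" using sum.IH unfolding wfL_def V_def by auto
  have B: "V \<noteq> {}" unfolding V_def by auto
  have C: "\<forall>f\<in>E. f \<noteq> {} \<and> f \<subseteq> V"
  proof
    fix f assume "f \<in> E"
    then have "f \<in> snd H1 \<or> f \<in> snd H2 \<or> f = insert z e1 \<or> f = insert z e2" unfolding E_def by auto
    then show "f \<noteq> {} \<and> f \<subseteq> V" using w1 w2 e12 unfolding V_def by blast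
  qed
  have D: "\<forall>v\<in>V. \<exists>f\<in>E. v\<in>f"
  proof
    fix v assume v: "v \<in> V"
    have z1: "insert z e1 \<in> E" unfolding E_def using ne by auto
    have z2: "insert z e2 \<in> E" unfolding E_def using ne by auto
    have "v \<in> fst H1 \<or> v \<in> fst H2 \<or> v = z" using v unfolding V_def by auto
    moreover
    { assume "v = z" then have "\<exists>f\<in>E. v\<in>f" using z1 by auto }
    moreover
    { assume "v \<in> fst H1"
      then obtain f where f: "f \<in> snd H1" "v \<in> f" using sum.IH unfolding wfL_def by blast
      have "\<exists>f\<in>E. v\<in>f"
      proof (cases "f = e1")
        case True then show ?thesis using f z1 by auto
      next
        case False then have "f \<in> E" using f o1[OF f(1)] unfolding E_def by auto
        then show ?thesis using f by auto
      qed }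
    moreover
    { assume "v \<in> fst H2"
      then obtain f where f: "f \<in> snd H2" "v \<in> f" using sum.IH unfolding wfL_def by blast
      have "\<exists>f\<in>E. v\<in>f"
      proof (cases "f = e2")
        case True then show ?thesis using f z2 by auto
      next
        case False then have "f \<in> E" using f o2[OF f(1)] unfolding E_def by auto
        then show ?thesis using f by auto
      qed }
    ultimately show "\<exists>f\<in>E. v\<in>f" by blast
  qed
  show ?case unfolding hs wfL_def using A B C D by simp
qed


definition pairing :: "'a set \<Rightarrow> 'a set set \<Rightarrow> bool" where
 "pairing V P \<longleftrightarrow> (\<forall>p\<in>P. \<exists>a b. a \<noteq> b \<and> p = {a,b}) \<and> (\<forall>p\<in>P. \<forall>q\<in>P. p \<noteq> q \<longrightarrow> p \<inter> q = {}) \<and> \<Union>P \<subseteq> V"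

definition gd :: "'a set set \<Rightarrow> 'a set \<Rightarrow> 'a set \<Rightarrow> bool" where
 "gd P M B \<longleftrightarrow> M \<inter> B = {} \<and> (\<forall>p\<in>P. p \<inter> M \<noteq> {} \<longrightarrow> p \<inter> B \<noteq> {})"

lemma pairing_breaker:
  assumes "mb_win V E t M B" and pr: "pairing V P" and cov: "\<forall>f\<in>E. \<exists>p\<in>P. p \<subseteq> f"
  shows "(t \<longrightarrow> gd P M B) \<and> (\<not> t \<longrightarrow> (\<exists>u\<in>M. u \<notin> B \<and> gd P (M - {u}) B)) \<longrightarrow> False"
  using assms(1)
proof -
  have pr1: "\<And>p. p \<in> P \<Longrightarrow> \<exists>a b. a \<noteq> b \<and> p = {a,b}" using pr unfolding pairing_def by simp
  have pr2: "\<And>p q. p \<in> P \<Longrightarrow> q \<in> P \<Longrightarrow> p \<noteq> q \<Longrightarrow> p \<inter> q = {}" using pr unfolding pairing_def by simp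
  have pr3: "\<And>p x. p \<in> P \<Longrightarrow> x \<in> p \<Longrightarrow> x \<in> V" using pr unfolding pairing_def by auto
  have gdI: "\<And>M B. gd P M B \<Longrightarrow> M \<inter> B = {}" unfolding gd_def by simp
  have gdP: "\<And>M B p. gd P M B \<Longrightarrow> p \<in> P \<Longrightarrow> p \<inter> M \<noteq> {} \<Longrightarrow> p \<inter> B \<noteq> {}" unfolding gd_def by simp
  show ?thesis using assms(1)
proof (induction rule: mb_win.induct)
  case (final M B t)
  from final(2) obtain e where e: "e \<in> E" "e \<subseteq> M" by blast
  then obtain p where p: "p \<in> P" "p \<subseteq> M" using cov by blast
  then obtain a b where ab: "a \<noteq> b" "p = {a,b}" using pr1 by blast
  show ?case
  proof
    assume h: "(t \<longrightarrow> gd P M B) \<and> (\<not> t \<longrightarrow> (\<exists>u\<in>M. u \<notin> B \<and> gd P (M - {u}) B))"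
    show False
    proof (cases t)
      case True
      then have "gd P M B" using h by blast
      have "p \<inter> M \<noteq> {}" using p ab by blast
      then have "p \<inter> B \<noteq> {}" using gdP[OF \<open>gd P M B\<close> p(1)] by blast
      moreover have "M \<inter> B = {}" using gdI[OF \<open>gd P M B\<close>] .
      ultimately show False using p by blast
    next
      case False
      then obtain u where u: "u \<in> M" "u \<notin> B" "gd P (M - {u}) B" using h by blast
      have "p \<inter> (M - {u}) \<noteq> {}" using ab p by blast
      then have "p \<inter> B \<noteq> {}" using gdP[OF u(3) p(1)] by blast
      then obtain x where x: "x \<in> p" "x \<in> B" by blast
      have "(M - {u}) \<inter> B = {}" using gdI[OF u(3)] .
      then show False using u(2) x p by blast
    qed
  qed
next
  case (maker_move v M B)
  show ?case
  proof
    assume h: "(True \<longrightarrow> gd P M B) \<and> (\<not> True \<longrightarrow> (\<exists>u\<in>M. u \<notin> B \<and> gd P (M - {u}) B))"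
    have "insert v M - {v} = M" using maker_move.hyps(1) by blast
    then have "\<exists>u\<in>insert v M. u \<notin> B \<and> gd P (insert v M - {u}) B"
      using h maker_move.hyps(1) by auto
    then show False using maker_move.IH by blast
  qed
next
  case (breaker_move M B)
  show ?case
  proof
    assume h: "(False \<longrightarrow> gd P M B) \<and> (\<not> False \<longrightarrow> (\<exists>u\<in>M. u \<notin> B \<and> gd P (M - {u}) B))"
    then obtain u where u: "u \<in> M" "u \<notin> B" "gd P (M - {u}) B" by blast
    have disj: "M \<inter> B = {}" using gdI[OF u(3)] u(2) by blast
    obtain w0 where w0: "w0 \<in> V - (M \<union> B)" using breaker_move.hyps(1) by blast
    have other: "\<And>q B'. q \<in> P \<Longrightarrow> u \<notin> q \<Longrightarrow> B \<subseteq> B' \<Longrightarrow> q \<inter> M \<noteq> {} \<Longrightarrow> q \<inter> B' \<noteq> {}"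
    proof -
      fix q B' assume q: "q \<in> P" "u \<notin> q" "B \<subseteq> B'" "q \<inter> M \<noteq> {}"
      then have "q \<inter> (M - {u}) \<noteq> {}" by blast
      then have "q \<inter> B \<noteq> {}" using gdP[OF u(3) q(1)] by blast
      then show "q \<inter> B' \<noteq> {}" using q(3) by blast
    qed
    have "\<exists>w\<in>V - (M \<union> B). gd P M (insert w B)"
    proof (cases "\<exists>p\<in>P. u \<in> p")
      case True
      then obtain p where p: "p \<in> P" "u \<in> p" by blast
      then obtain a b where ab: "a \<noteq> b" "p = {a,b}" using pr1 by blast
      then obtain w where pw: "p = {u,w}" "u \<noteq> w" using p(2) by blast
      have wV: "w \<in> V" using pr3[OF p(1)] pw by blast
      have wM: "w \<notin> M"
      proof
        assume "w \<in> M"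
        then have "p \<inter> (M - {u}) \<noteq> {}" using pw by blast
        then have "p \<inter> B \<noteq> {}" using gdP[OF u(3) p(1)] by blast
        then show False using pw u(2) \<open>w \<in> M\<close> disj by blast
      qed
      have qo: "\<And>q. q \<in> P \<Longrightarrow> q \<noteq> p \<Longrightarrow> u \<notin> q"
      proof -
        fix q assume "q \<in> P" "q \<noteq> p"
        then have "q \<inter> p = {}" using pr2 p(1) by blast
        then show "u \<notin> q" using p(2) by blast
      qed
      show ?thesis
      proof (cases "w \<in> B")
        case True
        have "gd P M (insert w0 B)" unfolding gd_def
        proof (intro conjI ballI impI)
          show "M \<inter> insert w0 B = {}" using disj w0 by blast
        next
          fix q assume q: "q \<in> P" "q \<inter> M \<noteq> {}"
          show "q \<inter> insert w0 B \<noteq> {}"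
          proof (cases "q = p")
            case True then show ?thesis using \<open>w \<in> B\<close> pw by blast
          next
            case False then show ?thesis using other[OF q(1) qo[OF q(1) False] subset_insertI[of B w0] q(2)] by simp
          qed
        qed
        then show ?thesis using w0 by blast
      next
        case False
        have "gd P M (insert w B)" unfolding gd_def
        proof (intro conjI ballI impI)
          show "M \<inter> insert w B = {}" using disj wM by blast
        next
          fix q assume q: "q \<in> P" "q \<inter> M \<noteq> {}"
          show "q \<inter> insert w B \<noteq> {}"
          proof (cases "q = p")
            case True then show ?thesis using pw by blast
          next
            case False then show ?thesis using other[OF q(1) qo[OF q(1) False] subset_insertI[of B w] q(2)] by simp
          qed
        qed
        then show ?thesis using wV wM False by blast
      qed
    next
      case False
      have "gd P M (insert w0 B)" unfolding gd_def
      proof (intro conjI ballI impI)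
        show "M \<inter> insert w0 B = {}" using disj w0 by blast
      next
        fix q assume q: "q \<in> P" "q \<inter> M \<noteq> {}"
        have "u \<notin> q" using False q(1) by blast
        then show "q \<inter> insert w0 B \<noteq> {}" using other[OF q(1) _ subset_insertI[of B w0] q(2)] by blast
      qed
      then show ?thesis using w0 by blast
    qed
    then obtain w where w: "w \<in> V - (M \<union> B)" "gd P M (insert w B)" by blast
    then show False using breaker_move.IH by blast
  qed
qed
qed


definition PI :: "'a hypergraph \<Rightarrow> 'a set \<Rightarrow> bool" where
 "PI H e \<longleftrightarrow> (\<exists>P. pairing (fst H) P \<and> (\<exists>u\<in>e. u \<notin> \<Union>P) \<and> (\<forall>f\<in>snd H - {e}. \<exists>p\<in>P. p \<subseteq> f))"

lemma PI_step:
  assumes w1: "wfL H1" and w2: "wfL H2" and dj: "fst H1 \<inter> fst H2 = {}"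
    and e1: "e1 \<in> snd H1" and e2: "e2 \<in> snd H2" and z: "z \<notin> fst H1 \<union> fst H2"
    and I1: "\<forall>e\<in>snd H1. PI H1 e" and I2: "\<forall>e\<in>snd H2. PI H2 e"
    and e: "e = insert z e1 \<or> (e \<in> snd H1 \<and> e \<noteq> e1)"
  shows "PI (hsum H1 e1 H2 e2 z) e"
proof -
  define e' where "e' = (if e = insert z e1 then e1 else e)"
  have ze: "z \<notin> e1" "z \<notin> e2" using w1 w2 e1 e2 z unfolding wfL_def by blast+
  have e'1: "e' \<in> snd H1" using e e1 unfolding e'_def by auto
  have e'e: "e' \<subseteq> e" unfolding e'_def by auto
  have e'ne: "e' \<noteq> e1 \<Longrightarrow> e' = e \<and> e \<in> snd H1" using e unfolding e'_def by auto
  have wf1: "\<And>f. f \<in> snd H1 \<Longrightarrow> f \<noteq> {} \<and> f \<subseteq> fst H1" using w1 unfolding wfL_def by blast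
  have wf2: "\<And>f. f \<in> snd H2 \<Longrightarrow> f \<noteq> {} \<and> f \<subseteq> fst H2" using w2 unfolding wfL_def by blast
  have pi1: "PI H1 e'" using I1 e'1 by blast
  have pi2: "PI H2 e2" using I2 e2 by blast
  obtain P1 where P1: "pairing (fst H1) P1" "\<exists>u\<in>e'. u \<notin> \<Union>P1" "\<forall>f\<in>snd H1 - {e'}. \<exists>p\<in>P1. p \<subseteq> f"
    using pi1 unfolding PI_def by (elim exE conjE) blast
  obtain P2 where P2: "pairing (fst H2) P2" "\<exists>u\<in>e2. u \<notin> \<Union>P2" "\<forall>f\<in>snd H2 - {e2}. \<exists>p\<in>P2. p \<subseteq> f"
    using pi2 unfolding PI_def by (elim exE conjE) blast
  obtain u1 where u1: "u1 \<in> e'" "u1 \<notin> \<Union>P1" using P1(2) by blast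
  obtain u2 where u2: "u2 \<in> e2" "u2 \<notin> \<Union>P2" using P2(2) by blast
  have u1V: "u1 \<in> fst H1" using wf1[OF e'1] u1 by blast
  have u2V: "u2 \<in> fst H2" using wf2[OF e2] u2 by blast
  have sub1: "\<Union>P1 \<subseteq> fst H1" using P1(1) unfolding pairing_def by simp
  have sub2: "\<Union>P2 \<subseteq> fst H2" using P2(1) unfolding pairing_def by simp
  define P where "P = P1 \<union> P2 \<union> {{u2, z}}"
  have pa: "pairing (fst (hsum H1 e1 H2 e2 z)) P"
    unfolding pairing_def
  proof (intro conjI ballI impI)
    fix p assume "p \<in> P"
    then have "p \<in> P1 \<or> p \<in> P2 \<or> p = {u2, z}" unfolding P_def by blast
    moreover have "u2 \<noteq> z" using u2V z by blast
    moreover have "\<And>p. p \<in> P1 \<Longrightarrow> \<exists>a b. a \<noteq> b \<and> p = {a, b}" using P1(1) unfolding pairing_def by simp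
    moreover have "\<And>p. p \<in> P2 \<Longrightarrow> \<exists>a b. a \<noteq> b \<and> p = {a, b}" using P2(1) unfolding pairing_def by simp
    ultimately show "\<exists>a b. a \<noteq> b \<and> p = {a, b}" by metis
  next
    fix p q assume pq: "p \<in> P" "q \<in> P" "p \<noteq> q"
    have d12: "p \<inter> q = {}" if "p \<in> P1" "q \<in> P2" for p q
    proof -
      have "p \<subseteq> fst H1" "q \<subseteq> fst H2" using sub1 sub2 that by blast+
      then show ?thesis using dj by blast
    qed
    have d1z: "p \<inter> {u2, z} = {}" if "p \<in> P1" for p
    proof -
      have "p \<subseteq> fst H1" using sub1 that by blast
      then show ?thesis using u2V dj z by blast
    qed
    have d2z: "p \<inter> {u2, z} = {}" if "p \<in> P2" for p
    proof -
      have "p \<subseteq> fst H2" "u2 \<notin> p" using sub2 u2 that by blast+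
      then show ?thesis using z by blast
    qed
    have dd1: "\<And>p q. p \<in> P1 \<Longrightarrow> q \<in> P1 \<Longrightarrow> p \<noteq> q \<Longrightarrow> p \<inter> q = {}" using P1(1) unfolding pairing_def by simp
    have dd2: "\<And>p q. p \<in> P2 \<Longrightarrow> q \<in> P2 \<Longrightarrow> p \<noteq> q \<Longrightarrow> p \<inter> q = {}" using P2(1) unfolding pairing_def by simp
    have hp: "p \<in> P1 \<or> p \<in> P2 \<or> p = {u2, z}" using pq unfolding P_def by blast
    have hq: "q \<in> P1 \<or> q \<in> P2 \<or> q = {u2, z}" using pq unfolding P_def by blast
    show "p \<inter> q = {}"
    proof (cases "p \<in> P1")
      case p1: True
      show ?thesis
      proof (cases "q \<in> P1")
        case True then show ?thesis using dd1 p1 pq(3) by blast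
      next
        case False then have "q \<in> P2 \<or> q = {u2, z}" using hq by blast
        then show ?thesis using d12[OF p1] d1z[OF p1] by blast
      qed
    next
      case np1: False
      show ?thesis
      proof (cases "p \<in> P2")
        case p2: True
        show ?thesis
        proof (cases "q \<in> P2")
          case True then show ?thesis using dd2 p2 pq(3) by blast
        next
          case False then have "q \<in> P1 \<or> q = {u2, z}" using hq by blast
          moreover have "q \<in> P1 \<Longrightarrow> p \<inter> q = {}" using d12[of q p] p2 by blast
          ultimately show ?thesis using d2z[OF p2] by blast
        qed
      next
        case False
        then have pz: "p = {u2, z}" using hp np1 by blast
        then have "q \<in> P1 \<or> q \<in> P2" using hq pq(3) by blast
        then show ?thesis using d1z[of q] d2z[of q] pz by blast
      qed
    qed
  next
    show "\<Union>P \<subseteq> fst (hsum H1 e1 H2 e2 z)" using sub1 sub2 u2V unfolding P_def hsum_def by auto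
  qed
  have un: "u1 \<in> e \<and> u1 \<notin> \<Union>P"
  proof -
    have "u1 \<notin> \<Union>P2" using sub2 u1V dj by blast
    moreover have "u1 \<noteq> u2" "u1 \<noteq> z" using u1V u2V dj z by blast+
    ultimately show ?thesis using u1 e'e unfolding P_def by blast
  qed
  have cv: "\<forall>f\<in>snd (hsum H1 e1 H2 e2 z) - {e}. \<exists>p\<in>P. p \<subseteq> f"
  proof
    fix f assume f: "f \<in> snd (hsum H1 e1 H2 e2 z) - {e}"
    then have fc: "(f \<in> snd H1 \<and> f \<noteq> e1) \<or> (f \<in> snd H2 \<and> f \<noteq> e2) \<or> f = insert z e1 \<or> f = insert z e2"
      unfolding hsum_def by auto
    have fe: "f \<noteq> e" using f by blast
    show "\<exists>p\<in>P. p \<subseteq> f"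
    proof -
      { assume a: "f \<in> snd H1" "f \<noteq> e1"
        have "f \<noteq> e'"
        proof
          assume "f = e'"
          then have "e' \<noteq> e1" using a by simp
          then have "e' = e" using e'ne by blast
          then show False using \<open>f = e'\<close> fe by simp
        qed
        then have ?thesis using P1(3) a unfolding P_def by blast }
      moreover
      { assume a: "f \<in> snd H2" "f \<noteq> e2"
        then have ?thesis using P2(3) unfolding P_def by blast }
      moreover
      { assume a: "f = insert z e1"
        then have "e \<noteq> insert z e1" using fe by simp
        then have "e' = e" "e \<noteq> e1" using e unfolding e'_def by auto
        then have "e1 \<in> snd H1 - {e'}" using e1 by blast
        then obtain p where "p \<in> P1" "p \<subseteq> e1" using P1(3) by blast
        then have ?thesis using a unfolding P_def by blast }
      moreover
      { assume a: "f = insert z e2"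
        have "{u2, z} \<in> P" unfolding P_def by blast
        moreover have "{u2, z} \<subseteq> f" using a u2 by blast
        ultimately have ?thesis by blast }
      ultimately show ?thesis using fc by blast
    qed
  qed
  show ?thesis unfolding PI_def using pa un cv by blast
qed

lemma PI_L: "in_L H \<Longrightarrow> \<forall>e\<in>snd H. PI H e"
proof (induction rule: in_L.induct)
  case (base v)
  show ?case unfolding PI_def pairing_def by auto
next
  case (sum H1 H2 e1 e2 z)
  have w1: "wfL H1" using sum.hyps(1) by (rule wfL_L)
  have w2: "wfL H2" using sum.hyps(2) by (rule wfL_L)
  show ?case
  proof
    fix e assume "e \<in> snd (hsum H1 e1 H2 e2 z)"
    then have "e = insert z e1 \<or> (e \<in> snd H1 \<and> e \<noteq> e1) \<or> e = insert z e2 \<or> (e \<in> snd H2 \<and> e \<noteq> e2)"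
      unfolding hsum_def by auto
    then show "PI (hsum H1 e1 H2 e2 z) e"
    proof (elim disjE)
      assume "e = insert z e1" then show ?thesis
        using PI_step[OF w1 w2 sum.hyps(3-5) _ sum.IH] sum.hyps(6) by blast
    next
      assume "e \<in> snd H1 \<and> e \<noteq> e1" then show ?thesis
        using PI_step[OF w1 w2 sum.hyps(3-5) _ sum.IH] sum.hyps(6) by blast
    next
      assume "e = insert z e2" then show ?thesis
        using PI_step[OF w2 w1 _ sum.hyps(5,4) _ sum.IH(2,1)] sum.hyps(3,6) hsum_sym by (metis Int_commute Un_commute)
    next
      assume "e \<in> snd H2 \<and> e \<noteq> e2" then show ?thesis
        using PI_step[OF w2 w1 _ sum.hyps(5,4) _ sum.IH(2,1)] sum.hyps(3,6) hsum_sym by (metis Int_commute Un_commute)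
    qed
  qed
qed


lemma card_lt_M:
  assumes "finite V" "w \<in> V - (M \<union> B)"
  shows "card (V - (insert w M \<union> B)) < card (V - (M \<union> B))"
proof -
  have "V - (insert w M \<union> B) = (V - (M \<union> B)) - {w}" by blast
  moreover have "finite (V - (M \<union> B))" using assms(1) by simp
  ultimately show ?thesis using card_Diff1_less assms(2) by metis
qed

lemma card_lt_B:
  assumes "finite V" "w \<in> V - (M \<union> B)"
  shows "card (V - (M \<union> insert w B)) < card (V - (M \<union> B))"
proof -
  have "V - (M \<union> insert w B) = (V - (M \<union> B)) - {w}" by blast
  moreover have "finite (V - (M \<union> B))" using assms(1) by simp
  ultimately show ?thesis using card_Diff1_less assms(2) by metis
qed

lemma maker_won:
  assumes fin: "finite V"
  shows "\<exists>e\<in>E. e \<subseteq> M \<Longrightarrow> mb_win V E t M B"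
proof (induction "card (V - (M \<union> B))" arbitrary: t M B rule: less_induct)
  case less
  show ?case
  proof (cases "V \<subseteq> M \<union> B")
    case True then show ?thesis using less.prems by (rule mb_win.final)
  next
    case nf: False
    then obtain v where v: "v \<in> V - (M \<union> B)" by blast
    show ?thesis
    proof (cases t)
      case True
      have "\<exists>e\<in>E. e \<subseteq> insert v M" using less.prems by blast
      then have "mb_win V E False (insert v M) B" using less.hyps[OF card_lt_M[OF fin v]] by blast
      then show ?thesis using mb_win.maker_move[OF v] True by simp
    next
      case False
      have "\<forall>w\<in>V - (M \<union> B). mb_win V E True M (insert w B)"
      proof
        fix w assume w: "w \<in> V - (M \<union> B)"
        show "mb_win V E True M (insert w B)" using less.hyps[OF card_lt_B[OF fin w]] less.prems by blast
      qed
      then show ?thesis using mb_win.breaker_move[OF nf] False by simp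
    qed
  qed
qed

definition emb :: "'a set \<Rightarrow> 'a set set \<Rightarrow> 'a set \<Rightarrow> 'a set \<Rightarrow> 'a hypergraph \<Rightarrow> bool" where
 "emb V E M B H \<longleftrightarrow> in_L H \<and> fst H \<subseteq> V - (M \<union> B) \<and> (\<forall>f\<in>snd H. \<exists>e\<in>E. e \<subseteq> f \<union> M)"

lemma emb_sub:
  assumes h: "emb V E M B (hsum H1 e1 H2 e2 z)" and L1: "in_L H1" and L2: "in_L H2"
    and dj: "fst H1 \<inter> fst H2 = {}" and e1: "e1 \<in> snd H1" and e2: "e2 \<in> snd H2"
    and z: "z \<notin> fst H1 \<union> fst H2"
  shows "emb V E (insert z M) B H1"
proof -
  have w1: "wfL H1" using L1 by (rule wfL_L)
  have w2: "wfL H2" using L2 by (rule wfL_L)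
  have wf1: "\<And>f. f \<in> snd H1 \<Longrightarrow> f \<noteq> {} \<and> f \<subseteq> fst H1" using w1 unfolding wfL_def by blast
  have wf2: "\<And>f. f \<in> snd H2 \<Longrightarrow> f \<noteq> {} \<and> f \<subseteq> fst H2" using w2 unfolding wfL_def by blast
  have ze: "z \<notin> e1" "z \<notin> e2" using wf1[OF e1] wf2[OF e2] z by blast+
  have sub: "fst (hsum H1 e1 H2 e2 z) \<subseteq> V - (M \<union> B)" using h unfolding emb_def by blast
  have ed: "\<And>f. f \<in> snd (hsum H1 e1 H2 e2 z) \<Longrightarrow> \<exists>e\<in>E. e \<subseteq> f \<union> M" using h unfolding emb_def by blast
  have s1: "fst H1 \<subseteq> V - (insert z M \<union> B)" using sub z unfolding hsum_def by auto
  have s2: "\<forall>f\<in>snd H1. \<exists>e\<in>E. e \<subseteq> f \<union> insert z M"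
  proof
    fix f assume f: "f \<in> snd H1"
    show "\<exists>e\<in>E. e \<subseteq> f \<union> insert z M"
    proof (cases "f = e1")
      case True
      have "insert z e1 \<noteq> e1" "insert z e1 \<noteq> e2" using ze by blast+
      then have "insert z e1 \<in> snd (hsum H1 e1 H2 e2 z)" unfolding hsum_def by simp
      then obtain e where "e \<in> E" "e \<subseteq> insert z e1 \<union> M" using ed by blast
      then show ?thesis using True by blast
    next
      case False
      have "f \<noteq> e2"
      proof
        assume "f = e2"
        then have "f \<noteq> {}" "f \<subseteq> fst H1" "f \<subseteq> fst H2" using wf1[OF f] wf2[OF e2] by auto
        then show False using dj by blast
      qed
      then have "f \<in> snd (hsum H1 e1 H2 e2 z)" using f False unfolding hsum_def by simp
      then obtain e where "e \<in> E" "e \<subseteq> f \<union> M" using ed by blast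
      then show ?thesis by blast
    qed
  qed
  show ?thesis unfolding emb_def using L1 s1 s2 by blast
qed

lemma maker_main:
  assumes fin: "finite V"
  shows "(\<forall>H. emb V E M B H \<longrightarrow> mb_win V E True M B) \<and>
         (\<forall>H1 H2. emb V E M B H1 \<and> emb V E M B H2 \<and> fst H1 \<inter> fst H2 = {} \<longrightarrow> mb_win V E False M B)"
proof (induction "card (V - (M \<union> B))" arbitrary: M B rule: less_induct)
  case less
  show ?case
  proof (intro conjI allI impI)
    fix H assume h: "emb V E M B H"
    have L: "in_L H" using h unfolding emb_def by blast
    have sub: "fst H \<subseteq> V - (M \<union> B)" using h unfolding emb_def by blast
    have ed: "\<And>f. f \<in> snd H \<Longrightarrow> \<exists>e\<in>E. e \<subseteq> f \<union> M" using h unfolding emb_def by blast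
    from L show "mb_win V E True M B"
    proof (cases rule: in_L.cases)
      case (base v)
      then have v: "v \<in> V - (M \<union> B)" using sub by simp
      have "\<exists>e\<in>E. e \<subseteq> {v} \<union> M" using ed base by simp
      then have "\<exists>e\<in>E. e \<subseteq> insert v M" by simp
      then have "mb_win V E False (insert v M) B" by (rule maker_won[OF fin])
      then show ?thesis by (rule mb_win.maker_move[OF v])
    next
      case (sum H1 H2 e1 e2 z)
      have hh: "emb V E M B (hsum H1 e1 H2 e2 z)" using h sum(1) by simp
      have zV: "z \<in> V - (M \<union> B)" using sub sum(1) unfolding hsum_def by auto
      have m1: "emb V E (insert z M) B H1" using emb_sub[OF hh sum(2-7)] .
      have hh2: "emb V E M B (hsum H2 e2 H1 e1 z)" using hh hsum_sym by metis
      have dj2: "fst H2 \<inter> fst H1 = {}" using sum(4) by blast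
      have z2: "z \<notin> fst H2 \<union> fst H1" using sum(7) by blast
      have m2: "emb V E (insert z M) B H2" using emb_sub[OF hh2 sum(3) sum(2) dj2 sum(6) sum(5) z2] .
      have "mb_win V E False (insert z M) B"
        using less.hyps[OF card_lt_M[OF fin zV]] m1 m2 sum(4) by blast
      then show ?thesis by (rule mb_win.maker_move[OF zV])
    qed
  next
    fix H1 H2 assume h: "emb V E M B H1 \<and> emb V E M B H2 \<and> fst H1 \<inter> fst H2 = {}"
    have s1: "fst H1 \<subseteq> V - (M \<union> B)" using h unfolding emb_def by blast
    have s2: "fst H2 \<subseteq> V - (M \<union> B)" using h unfolding emb_def by blast
    have L1: "in_L H1" using h unfolding emb_def by blast
    have ne: "fst H1 \<noteq> {}" using wfL_L[OF L1] unfolding wfL_def by blast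
    have nf: "\<not> V \<subseteq> M \<union> B" using s1 ne by blast
    have "\<forall>w\<in>V - (M \<union> B). mb_win V E True M (insert w B)"
    proof
      fix w assume w: "w \<in> V - (M \<union> B)"
      have IH: "\<And>H. emb V E M (insert w B) H \<Longrightarrow> mb_win V E True M (insert w B)"
        using less.hyps[OF card_lt_B[OF fin w]] by blast
      show "mb_win V E True M (insert w B)"
      proof (cases "w \<in> fst H1")
        case False
        have "emb V E M (insert w B) H1" using h s1 False unfolding emb_def by blast
        then show ?thesis by (rule IH)
      next
        case True
        then have "w \<notin> fst H2" using h by blast
        then have "emb V E M (insert w B) H2" using h s2 unfolding emb_def by blast
        then show ?thesis by (rule IH)
      qed
    qed
    then show "mb_win V E False M B" by (rule mb_win.breaker_move[OF nf])
  qed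
qed

theorem proposition6p8:
  fixes H :: "'a hypergraph"
  assumes "in_L H"
  shows "is_hypergraph H \<and> atomic_mb_critical H"
proof -
  have w: "wfL H" using assms by (rule wfL_L)
  have fin: "finite (fst H)" using w unfolding wfL_def by blast
  have edges: "\<And>f. f \<in> snd H \<Longrightarrow> f \<noteq> {} \<and> f \<subseteq> fst H" using w unfolding wfL_def by blast
  have atom: "\<forall>v\<in>fst H. \<exists>e\<in>snd H. v \<in> e" using w unfolding wfL_def by blast
  have hg: "is_hypergraph H" unfolding is_hypergraph_def using fin edges by blast
  have "emb (fst H) (snd H) {} {} H" unfolding emb_def using assms by blast
  then have mw: "maker_wins H" unfolding maker_wins_def using maker_main[OF fin] by blast
  have bw: "\<forall>e\<in>snd H. breaker_wins (fst H, snd H - {e})"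
  proof
    fix e assume e: "e \<in> snd H"
    have "PI H e" using PI_L[OF assms] e by blast
    then obtain P where P: "pairing (fst H) P" "\<forall>f\<in>snd H - {e}. \<exists>p\<in>P. p \<subseteq> f"
      unfolding PI_def by (elim exE conjE) blast
    have g: "gd P {} {}" unfolding gd_def by simp
    have "\<not> mb_win (fst H) (snd H - {e}) True {} {}"
    proof
      assume "mb_win (fst H) (snd H - {e}) True {} {}"
      from pairing_breaker[OF this P] g show False by blast
    qed
    then show "breaker_wins (fst H, snd H - {e})" unfolding breaker_wins_def maker_wins_def by simp
  qed
  show ?thesis using hg mw bw atom unfolding atomic_mb_critical_def mb_critical_def by blast
qed

end
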